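(* Let $P$ and $Q$ be probability distributions on a nonempty set $\mathcal{X}\subseteq\mathbb{R}^d$ and let $c\in(0,1)$. Let $\mathcal{F}$ be the set of measurable functions $h:\mathcal{X}\to\mathbb{R}$ with $\mathbb{E}_{X\sim P}[h(X)^2]<\infty$ and $\mathbb{E}_{Y\sim Q}[h(Y)^2]<\infty$. Assume $L_{P,Q,c}(h)>0$ for every $h\in\mathcal{F}$. Suppose $h^*\in\mathcal{F}$ minimizes the squared loss, i.e. $L_{P,Q,c}(h^* )=\min_{h\in\mathcal{F}}L_{P,Q,c}(h)$, and $\sigma_c(h^* )>0$. Then $h^*$ maximizes the signal-to-noise ratio: $\mathrm{SNR}(h^* )\ge \mathrm{SNR}(h)$ for every $h\in\mathcal{F}$ with $\sigma_c(h)>0$.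
   Context: For $h\in\mathcal{F}$ define: $\tau(P,Q\mid h)=\mathbb{E}_{X\sim P}[h(X)]-\mathbb{E}_{Y\sim Q}[h(Y)]$; $\sigma_c^2(h)=\dfrac{(1-c)\,\mathrm{Var}_{X\sim P}[h(X)]+c\,\mathrm{Var}_{Y\sim Q}[h(Y)]}{c(1-c)}$ with $\sigma_c(h)\ge0$; $\mathrm{SNR}(h)=\tau(P,Q\mid h)/\sigma_c(h)$ (defined when $\sigma_c(h)>0$); and $L_{P,Q,c}(h)=(1-c)\,\mathbb{E}_{X\sim P}[(1-h(X))^2]+c\,\mathbb{E}_{Y\sim Q}[h(Y)^2]$. *)

theory Defs
  imports "HOL-Probability.Probability"
begin

definition tau :: "'a measure \<Rightarrow> 'a measure \<Rightarrow> ('a \<Rightarrow> real) \<Rightarrow> real" where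
  "tau P Q h = (\<integral>x. h x \<partial>P) - (\<integral>y. h y \<partial>Q)"

definition var :: "'a measure \<Rightarrow> ('a \<Rightarrow> real) \<Rightarrow> real" where
  "var M h = (\<integral>x. (h x - (\<integral>z. h z \<partial>M))\<^sup>2 \<partial>M)"

definition sigma2 :: "'a measure \<Rightarrow> 'a measure \<Rightarrow> real \<Rightarrow> ('a \<Rightarrow> real) \<Rightarrow> real" where
  "sigma2 P Q c h = ((1 - c) * var P h + c * var Q h) / (c * (1 - c))"

definition sigma :: "'a measure \<Rightarrow> 'a measure \<Rightarrow> real \<Rightarrow> ('a \<Rightarrow> real) \<Rightarrow> real" where
  "sigma P Q c h = sqrt (sigma2 P Q c h)"

definition SNR :: "'a measure \<Rightarrow> 'a measure \<Rightarrow> real \<Rightarrow> ('a \<Rightarrow> real) \<Rightarrow> real" where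
  "SNR P Q c h = tau P Q h / sigma P Q c h"

definition sqloss :: "'a measure \<Rightarrow> 'a measure \<Rightarrow> real \<Rightarrow> ('a \<Rightarrow> real) \<Rightarrow> real" where
  "sqloss P Q c h = (1 - c) * (\<integral>x. (1 - h x)\<^sup>2 \<partial>P) + c * (\<integral>y. (h y)\<^sup>2 \<partial>Q)"

definition Fcls :: "'a::euclidean_space set \<Rightarrow> 'a measure \<Rightarrow> 'a measure \<Rightarrow> ('a \<Rightarrow> real) set" where
  "Fcls X P Q = {h. h \<in> borel_measurable (restrict_space borel X)
      \<and> integrable P (\<lambda>x. (h x)\<^sup>2) \<and> integrable Q (\<lambda>y. (h y)\<^sup>2)}"

end

theory Submission
  imports Defs
begin

lemma sq_lemma:
  fixes h :: "'a \<Rightarrow> real"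
  assumes M: "prob_space M" and hm: "h \<in> borel_measurable M" and h2: "integrable M (\<lambda>x. (h x)^2)"
  shows "integrable M h"
    and "integrable M (\<lambda>x. (a + b * h x)^2)"
    and "(\<integral>x. (k - (a + b * h x))^2 \<partial>M) = (k - a - b * (\<integral>x. h x \<partial>M))^2 + b^2 * var M h"
proof -
  interpret prob_space M by (rule M)
  show hi: "integrable M h" using square_integrable_imp_integrable[OF hm h2] .
  have e1: "\<And>x. (a + b * h x)^2 = a^2 + (2*a*b) * h x + b^2 * (h x)^2"
    by (simp add: power2_eq_square algebra_simps)
  show "integrable M (\<lambda>x. (a + b * h x)^2)"
    unfolding e1 using hi h2 by auto
  have e2: "\<And>x. (k - (a + b * h x))^2 = (k-a)^2 + (-2*(k-a)*b) * h x + b^2 * (h x)^2"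
    by (simp add: power2_eq_square algebra_simps)
  have I1: "(\<integral>x. (k - (a + b * h x))^2 \<partial>M) = (k-a)^2 + (-2*(k-a)*b) * (\<integral>x. h x \<partial>M) + b^2 * (\<integral>x. (h x)^2 \<partial>M)"
    unfolding e2 using hi h2 by (simp add: prob_space)
  have V: "var M h = (\<integral>x. (h x)^2 \<partial>M) - (\<integral>x. h x \<partial>M)^2"
    unfolding var_def using variance_eq[OF hi h2] by simp
  show "(\<integral>x. (k - (a + b * h x))^2 \<partial>M) = (k - a - b * (\<integral>x. h x \<partial>M))^2 + b^2 * var M h"
    unfolding I1 V by (simp add: power2_eq_square algebra_simps)
qed

lemma var_nonneg: "prob_space M \<Longrightarrow> var M h \<ge> 0"
  unfolding var_def by (simp add: prob_space.variance_positive)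


lemma final_alg:
  fixes t v T V :: real
  assumes v: "v > 0" and V: "V > 0"
    and A: "(1-t)^2 + v \<le> 1"
    and B: "(1-t)^2 + v \<le> V / (T^2 + V)"
  shows "T / sqrt V \<le> t / sqrt v"
proof -
  have t: "t > 0"
  proof (rule ccontr)
    assume "\<not> t > 0"
    hence "1 \<le> 1 - t" by simp
    hence "(1::real)^2 \<le> (1-t)^2" by (rule power_mono) simp
    hence "(1-t)^2 \<ge> 1" by simp
    thus False using A v by linarith
  qed
  have tv: "t^2 + v > 0" using v by (simp add: add_nonneg_pos)
  have TV: "T^2 + V > 0" using V by (simp add: add_nonneg_pos)
  have C: "v / (t^2 + v) \<le> (1-t)^2 + v"
  proof -
    have "((1-t)^2 + v) * (t^2 + v) - v = (t - t^2 - v)^2"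
      by (simp add: power2_eq_square algebra_simps)
    moreover have "0 \<le> (t - t^2 - v)^2" by (rule zero_le_power2)
    ultimately have "v \<le> ((1-t)^2 + v) * (t^2 + v)" by linarith
    thus ?thesis using tv by (simp add: divide_le_eq)
  qed
  have "v / (t^2 + v) \<le> V / (T^2 + V)" using B C by linarith
  hence "v * (T^2 + V) \<le> V * (t^2 + v)" using tv TV by (simp add: divide_le_eq le_divide_eq mult.commute)
  hence "v * T^2 \<le> V * t^2" by (simp add: algebra_simps)
  hence le: "T^2 / V \<le> t^2 / v" using v V by (simp add: divide_le_eq le_divide_eq mult.commute)
  have "T / sqrt V \<le> \<bar>T\<bar> / sqrt V" using V by (simp add: divide_right_mono)
  also have "\<dots> = sqrt (T^2 / V)" by (simp add: real_sqrt_divide)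
  also have "\<dots> \<le> sqrt (t^2 / v)" using le by simp
  also have "\<dots> = t / sqrt v" using t by (simp add: real_sqrt_divide)
  finally show ?thesis .
qed

theorem proposition1:
  fixes X :: "'a::euclidean_space set"
    and P Q :: "'a measure"
    and c :: real
    and hstar :: "'a \<Rightarrow> real"
  assumes "X \<noteq> {}"
    and "prob_space P" and "prob_space Q"
    and "space P = X" and "sets P = sets (restrict_space borel X)"
    and "space Q = X" and "sets Q = sets (restrict_space borel X)"
    and "0 < c" and "c < 1"
    and "\<forall>h\<in>Fcls X P Q. sqloss P Q c h > 0"
    and "hstar \<in> Fcls X P Q"
    and "\<forall>h\<in>Fcls X P Q. sqloss P Q c hstar \<le> sqloss P Q c h"
    and "sigma P Q c hstar > 0"
  shows "\<forall>h\<in>Fcls X P Q. sigma P Q c h > 0 \<longrightarrow> SNR P Q c hstar \<ge> SNR P Q c h"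
proof -
  note PQ = assms(2,3)
  have c0: "c > 0" and c1: "c < 1" using assms by auto
  define mP where "mP h = (\<integral>x. h x \<partial>P)" for h :: "'a \<Rightarrow> real"
  define mQ where "mQ h = (\<integral>x. h x \<partial>Q)" for h :: "'a \<Rightarrow> real"
  have meas: "h \<in> borel_measurable P" "h \<in> borel_measurable Q" if "h \<in> Fcls X P Q" for h
    using that assms(5,7) measurable_cong_sets[of P "restrict_space borel X" borel borel]
      measurable_cong_sets[of Q "restrict_space borel X" borel borel]
    unfolding Fcls_def by auto
  have K: "(\<lambda>x. a + b * h x) \<in> Fcls X P Q \<and>
     sqloss P Q c (\<lambda>x. a + b * h x) = (1-c) * (1 - a - b * mP h)^2 + c * (0 - a - b * mQ h)^2
        + b^2 * (c * (1-c)) * sigma2 P Q c h"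
    if h: "h \<in> Fcls X P Q" for h a b
  proof -
    have h2P: "integrable P (\<lambda>x. (h x)^2)" and h2Q: "integrable Q (\<lambda>x. (h x)^2)"
      and hm: "h \<in> borel_measurable (restrict_space borel X)" using h unfolding Fcls_def by auto
    note LP = sq_lemma[OF PQ(1) meas(1)[OF h] h2P]
    note LQ = sq_lemma[OF PQ(2) meas(2)[OF h] h2Q]
    have "(\<lambda>x. a + b * h x) \<in> borel_measurable (restrict_space borel X)" using hm by measurable
    hence mem: "(\<lambda>x. a + b * h x) \<in> Fcls X P Q" unfolding Fcls_def using LP(2) LQ(2) by auto
    have q: "(\<integral>y. (a + b * h y)^2 \<partial>Q) = (\<integral>y. (0 - (a + b * h y))^2 \<partial>Q)"
      by (rule Bochner_Integration.integral_cong) (auto simp: power2_eq_square algebra_simps)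
    have "sqloss P Q c (\<lambda>x. a + b * h x) = (1-c) * ((1 - a - b * mP h)^2 + b^2 * var P h)
       + c * ((0 - a - b * mQ h)^2 + b^2 * var Q h)"
      unfolding sqloss_def q LP(3) LQ(3) mP_def mQ_def by simp
    also have "\<dots> = (1-c) * (1 - a - b * mP h)^2 + c * (0 - a - b * mQ h)^2
        + b^2 * (c * (1-c)) * sigma2 P Q c h"
      using c0 c1 unfolding sigma2_def by (simp add: field_simps)
    finally show ?thesis using mem by simp
  qed
  have tau_eq: "tau P Q h = mP h - mQ h" for h unfolding tau_def mP_def mQ_def by simp
  have U: "sqloss P Q c hstar \<le> c * (1-c) * ((1 - b * tau P Q h)^2 + b^2 * sigma2 P Q c h)"
    if h: "h \<in> Fcls X P Q" for h b
  proof -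
    define a where "a = (1-c) * (1 - b * tau P Q h) - b * mQ h"
    have "sqloss P Q c hstar \<le> sqloss P Q c (\<lambda>x. a + b * h x)" using assms(12) K[OF h] by blast
    also have "\<dots> = c * (1-c) * ((1 - b * tau P Q h)^2 + b^2 * sigma2 P Q c h)"
      using K[OF h, of a b] unfolding a_def tau_eq by (simp add: power2_eq_square algebra_simps)
    finally show ?thesis .
  qed
  have Lo: "sqloss P Q c hstar \<ge> c * (1-c) * ((1 - tau P Q hstar)^2 + sigma2 P Q c hstar)"
  proof -
    have e: "(\<lambda>x. 0 + 1 * hstar x) = hstar" by simp
    have L: "sqloss P Q c hstar = (1-c) * (1 - mP hstar)^2 + c * (0 - mQ hstar)^2
        + (c * (1-c)) * sigma2 P Q c hstar"
      using K[OF assms(11), of 0 1] unfolding e by simp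
    have "(1-c) * (1 - mP hstar)^2 + c * (0 - mQ hstar)^2 - c * (1-c) * (1 - tau P Q hstar)^2
       = ((1-c) * (1 - mP hstar) - c * mQ hstar)^2"
      unfolding tau_eq by (simp add: power2_eq_square algebra_simps)
    hence "(1-c) * (1 - mP hstar)^2 + c * (0 - mQ hstar)^2 \<ge> c * (1-c) * (1 - tau P Q hstar)^2"
      using zero_le_power2[of "(1-c) * (1 - mP hstar) - c * mQ hstar"] by linarith
    thus ?thesis using L by (simp add: algebra_simps)
  qed
  have cc: "c * (1-c) > 0" using c0 c1 by simp
  have vs: "sigma2 P Q c hstar > 0" using assms(13) unfolding sigma_def by simp
  show ?thesis
  proof (intro ballI impI)
    fix h assume h: "h \<in> Fcls X P Q" and sh: "sigma P Q c h > 0"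
    have V: "sigma2 P Q c h > 0" using sh unfolding sigma_def by simp
    define T where "T = tau P Q h"
    define Vv where "Vv = sigma2 P Q c h"
    have A: "(1 - tau P Q hstar)^2 + sigma2 P Q c hstar \<le> 1"
    proof -
      have "c * (1-c) * ((1 - tau P Q hstar)^2 + sigma2 P Q c hstar) \<le> c * (1-c) * 1"
        using Lo U[OF h, of 0] by simp
      thus ?thesis using cc mult_le_cancel_left_pos by blast
    qed
    have TV: "T^2 + Vv > 0" using V unfolding Vv_def by (simp add: add_nonneg_pos)
    have E: "(1 - (T/(T^2+Vv)) * T)^2 + (T/(T^2+Vv))^2 * Vv = Vv / (T^2 + Vv)"
    proof -
      define D where "D = T^2 + Vv"
      have D: "D > 0" using TV unfolding D_def .
      have d1: "1 - (T/D) * T = Vv/D" using D unfolding D_def by (simp add: field_simps power2_eq_square)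
      have "(Vv/D)^2 + (T/D)^2 * Vv = (Vv * D) / (D * D)"
        unfolding D_def by (simp add: power_divide add_divide_distrib power2_eq_square algebra_simps)
      also have "\<dots> = Vv / D" using D by simp
      finally show ?thesis using d1 unfolding D_def by simp
    qed
    have U': "sqloss P Q c hstar \<le> c * (1-c) * ((1 - (T/(T^2+Vv)) * T)^2 + (T/(T^2+Vv))^2 * Vv)"
      using U[OF h, of "T/(T^2+Vv)"] by (simp only: T_def Vv_def)
    have "sqloss P Q c hstar \<le> c * (1-c) * (Vv / (T^2 + Vv))"
      using U' unfolding E .
    hence "c * (1-c) * ((1 - tau P Q hstar)^2 + sigma2 P Q c hstar) \<le> c * (1-c) * (Vv / (T^2 + Vv))"
      using Lo by (rule order_trans[rotated])
    hence B: "(1 - tau P Q hstar)^2 + sigma2 P Q c hstar \<le> Vv / (T^2 + Vv)"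
      using cc mult_le_cancel_left_pos by blast
    show "SNR P Q c hstar \<ge> SNR P Q c h"
    proof -
      have B': "(1 - tau P Q hstar)^2 + sigma2 P Q c hstar \<le> sigma2 P Q c h / ((tau P Q h)^2 + sigma2 P Q c h)"
        using B by (simp only: T_def Vv_def)
      have "tau P Q h / sqrt (sigma2 P Q c h) \<le> tau P Q hstar / sqrt (sigma2 P Q c hstar)"
        by (rule final_alg[OF vs V A B'])
      thus ?thesis unfolding SNR_def sigma_def .
    qed
  qed
qed

end
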